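(* Let $\mathscr{B}=\{A,B,C,D\}$ and let $S$ be the substitution $A\mapsto AB$, $B\mapsto AC$, $C\mapsto DB$, $D\mapsto DC$, with associated (Golay-Rudin-Shapiro) subshift $\Xi\subseteq\mathscr{B}^{\mathbb{Z}}$. For $x\in\{A,B,C,D\}$ and $k\in\mathbb{N}$ let $\eta^x_k=(S^k(x))^\infty$ and $\Xi^x_k=\mathrm{Orb}(\eta^x_k)$. Then $\Xi$ is periodically approximable and for each $x\in\{A,B,C,D\}$ the sequence $(\Xi^x_k)_k$ converges to $\Xi$ in the Hausdorff topology.
   Context: $S$ extends to finite words as a homomorphism for concatenation. The associated subshift is $\Xi=\{\xi\in\mathscr{B}^{\mathbb{Z}}:\text{every finite subword of }\xi\text{ is a subword of some }S^n(c),\ n\in\mathbb{N},\ c\in\mathscr{B}\}$. For a finite word $u$, $u^\infty$ is the two-sided periodic sequence repeating $u$. $\mathscr{B}^{\mathbb{Z}}$ has the product topology and shift $(T\xi)(j)=\xi(j-1)$, $\mathrm{Orb}(\eta)=\{T^n\eta:n\in\mathbb{Z}\}$. Subshifts (non-empty closed $T$-invariant subsets) carry the Hausdorff (Vietoris) topology (basis: $\{\Xi:\Xi\cap F=\emptyset,\Xi\cap O\neq\emptyset\ \forall O\in\mathcal{F}\}$, $F$ closed, $\mathcal{F}$ a finite family of open sets). Periodically approximable means being a limit of subshifts $\mathrm{Orb}(\eta)$ with $\eta$ periodic. *)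

theory Defs
  imports "HOL-Analysis.Analysis" "HOL-Library.Sublist"
begin

datatype letter = A | B | C | D

fun grs_letter :: "letter \<Rightarrow> letter list" where
  "grs_letter A = [A, B]"
| "grs_letter B = [A, C]"
| "grs_letter C = [D, B]"
| "grs_letter D = [D, C]"

definition grs :: "letter list \<Rightarrow> letter list" where
  "grs w = concat (map grs_letter w)"

definition seq_word :: "(int \<Rightarrow> 'a) \<Rightarrow> int \<Rightarrow> nat \<Rightarrow> 'a list" where
  "seq_word \<xi> i n = map (\<lambda>k. \<xi> (i + int k)) [0..<n]"

definition GRS_Xi :: "(int \<Rightarrow> letter) set" where
  "GRS_Xi = {\<xi>. \<forall>i n. \<exists>m c. sublist (seq_word \<xi> i n) ((grs ^^ m) [c])}"

definition per_seq :: "'a list \<Rightarrow> int \<Rightarrow> 'a" where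
  "per_seq u j = u ! nat (j mod int (length u))"

definition shiftT :: "(int \<Rightarrow> 'a) \<Rightarrow> int \<Rightarrow> 'a" where
  "shiftT \<xi> j = \<xi> (j - 1)"

definition shift_pow :: "int \<Rightarrow> (int \<Rightarrow> 'a) \<Rightarrow> int \<Rightarrow> 'a" where
  "shift_pow n \<xi> j = \<xi> (j - n)"

definition Orb :: "(int \<Rightarrow> 'a) \<Rightarrow> (int \<Rightarrow> 'a) set" where
  "Orb \<eta> = {shift_pow n \<eta> | n. True}"

definition periodic_seq :: "(int \<Rightarrow> 'a) \<Rightarrow> bool" where
  "periodic_seq \<eta> \<longleftrightarrow> (\<exists>p>0. \<forall>j. \<eta> (j + p) = \<eta> j)"

definition prodtop :: "(int \<Rightarrow> letter) topology" where
  "prodtop = product_topology (\<lambda>_. discrete_topology UNIV) UNIV"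

definition subshifts :: "(int \<Rightarrow> letter) set set" where
  "subshifts = {X. X \<noteq> {} \<and> closedin prodtop X \<and> shiftT ` X = X}"

text \<open>Hausdorff (Vietoris) topology on the set of subshifts, generated by the
  basis from the paper.\<close>
definition vietoris :: "(int \<Rightarrow> letter) set topology" where
  "vietoris = topology_generated_by
     {{X \<in> subshifts. X \<inter> F = {} \<and> (\<forall>U\<in>\<U>. X \<inter> U \<noteq> {})} | F \<U>.
        closedin prodtop F \<and> finite \<U> \<and> (\<forall>U\<in>\<U>. openin prodtop U)}"

definition periodically_approximable :: "(int \<Rightarrow> letter) set \<Rightarrow> bool" where
  "periodically_approximable X \<longleftrightarrow>
     (\<exists>\<eta>. (\<forall>k. periodic_seq (\<eta> k)) \<and> limitin vietoris (\<lambda>k. Orb (\<eta> k)) X sequentially)"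

definition eta :: "letter \<Rightarrow> nat \<Rightarrow> int \<Rightarrow> letter" where
  "eta x k = per_seq ((grs ^^ k) [x])"

end

theory Submission
  imports Defs
begin


lemma grs_append[simp]: "grs (u @ v) = grs u @ grs v" by (simp add: grs_def)
lemma grs_Nil[simp]: "grs [] = []" by (simp add: grs_def)
lemma grsn_append: "(grs ^^ m) (u @ v) = (grs ^^ m) u @ (grs ^^ m) v" by (induct m) auto
lemma grsn_Nil[simp]: "(grs ^^ m) [] = []" by (induct m) auto
lemma length_grs_letter: "length (grs_letter c) = 2" by (cases c) auto
lemma length_grs: "length (grs w) = 2 * length w"
  by (induct w) (auto simp: grs_def length_grs_letter)
lemma length_grsn: "length ((grs^^m) w) = 2^m * length w"
  by (induct m) (auto simp: length_grs)

lemma sublist_grsn: "sublist u v \<Longrightarrow> sublist ((grs^^m) u) ((grs^^m) v)"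
  unfolding sublist_def by (auto simp: grsn_append) blast

lemma mem_sublist: "c \<in> set xs \<Longrightarrow> sublist [c] xs"
  by (metis append_Cons append_Nil split_list sublist_def)

lemma grsn_grsn: "(grs^^a) ((grs^^b) w) = (grs^^(a+b)) w"
  by (simp add: funpow_add)

definition legal :: "letter list \<Rightarrow> bool" where
  "legal w \<longleftrightarrow> (\<exists>m c. sublist w ((grs ^^ m) [c]))"

lemma GRS_Xi_iff: "\<xi> \<in> GRS_Xi \<longleftrightarrow> (\<forall>i n. legal (seq_word \<xi> i n))"
  by (simp add: GRS_Xi_def legal_def)

lemma legal_sub: "legal v \<Longrightarrow> sublist w v \<Longrightarrow> legal w"
  unfolding legal_def using sublist_order.order.trans by blast

lemma legal_grsn: "legal w \<Longrightarrow> legal ((grs^^j) w)"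
  unfolding legal_def by (metis grsn_grsn sublist_grsn)

lemma legal_letter_word: "legal ((grs^^j) [x])"
  unfolding legal_def by blast

lemma three_all: "sublist [c] ((grs^^3) [e])"
  by (cases c; cases e) (simp_all add: eval_nat_numeral grs_def sublist_Cons_right)

lemma all_letters:
  assumes "n \<ge> 3" shows "sublist [c] ((grs^^n) [d])"
proof -
  have "length ((grs^^(n-3)) [d]) \<noteq> 0" by (simp add: length_grsn)
  then obtain e r where er: "(grs^^(n-3)) [d] = e # r"
    by (cases "(grs^^(n-3)) [d]") auto
  have "(grs^^n) [d] = (grs^^3) ((grs^^(n-3)) [d])"
    using assms by (simp add: grsn_grsn)
  also have "\<dots> = (grs^^3) [e] @ (grs^^3) r"
    using er grsn_append[of 3 "[e]" r] by simp
  finally show ?thesis using three_all[of c e]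
    by (metis sublist_append_rightI sublist_order.order.trans)
qed

lemma legal_up:
  assumes "sublist w ((grs^^m) [c])" "k \<ge> m + 3"
  shows "sublist w ((grs^^k) [d])"
proof -
  have "sublist ((grs^^m) [c]) ((grs^^m) ((grs^^(k-m)) [d]))"
    using all_letters[of "k-m" c d] assms(2) sublist_grsn by auto
  also have "(grs^^m) ((grs^^(k-m)) [d]) = (grs^^k) [d]"
    using assms(2) by (simp add: grsn_grsn)
  finally show ?thesis using assms(1) sublist_order.order.trans by blast
qed

lemma window_sublist:
  assumes "p + n \<le> length v"
  shows "sublist (map (\<lambda>t. v ! (p+t)) [0..<n]) v"
proof -
  have "map (\<lambda>t. v ! (p+t)) [0..<n] = take n (drop p v)"
    using assms by (intro nth_equalityI) auto
  moreover have "v = take p v @ take n (drop p v) @ drop n (drop p v)"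
    by (metis append_take_drop_id)
  ultimately show ?thesis unfolding sublist_def by metis
qed

lemma sublist_window:
  assumes "sublist w v"
  shows "\<exists>p. p + length w \<le> length v \<and> w = map (\<lambda>t. v ! (p+t)) [0..<length w]"
proof -
  obtain ps ss where v: "v = ps @ w @ ss" using assms sublist_def by blast
  show ?thesis
    by (rule exI[of _ "length ps"]) (auto simp: v nth_append intro!: nth_equalityI)
qed

lemma legal_window: "legal v \<Longrightarrow> p + n \<le> length v \<Longrightarrow> legal (map (\<lambda>t. v ! (p+t)) [0..<n])"
  using legal_sub window_sublist by blast


definition XX :: "nat \<Rightarrow> letter list" where
  "XX k = (grs^^(2*k)) [B,A]"

lemma length_XX: "length (XX k) = 2 * 4^k"
  by (simp add: XX_def length_grsn power_mult)

lemma XX_Suc: "XX (Suc k) = (grs^^(2*k)) [A,B,D] @ XX k @ (grs^^(2*k)) [B,A,C]"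
proof -
  have "XX (Suc k) = (grs^^(2*k)) ((grs^^2) [B,A])"
    unfolding XX_def by (simp add: grsn_grsn)
  also have "(grs^^2) [B,A] = [A,B,D] @ [B,A] @ [B,A,C]"
    by (simp add: eval_nat_numeral grs_def)
  also have "(grs^^(2*k)) ([A,B,D] @ [B,A] @ [B,A,C]) = (grs^^(2*k)) [A,B,D] @ XX k @ (grs^^(2*k)) [B,A,C]"
    by (simp only: grsn_append XX_def)
  finally show ?thesis .
qed

lemma lt_four_pow: "(k::nat) < 4^k"
  by (induct k) auto
lemma lt_four_pow_int: "int k < 4^k"
proof -
  have "int k < int (4^k)" using lt_four_pow[of k] by linarith
  then show ?thesis by simp
qed
lemma nat_idx: "\<bar>j\<bar> < 4^k \<Longrightarrow> nat (j + 4^Suc k) = 3 * 4^k + nat (j + (4::int)^k)"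
proof -
  assume a: "\<bar>j\<bar> < 4^k"
  have e: "(4::int)^k = int (4^k)" by simp
  show ?thesis using a unfolding power_Suc e by arith
qed

definition xi0 :: "int \<Rightarrow> letter" where
  "xi0 j = XX (nat \<bar>j\<bar>) ! nat (j + 4^(nat \<bar>j\<bar>))"

lemma xi0_stable:
  assumes "nat \<bar>j\<bar> \<le> k" shows "xi0 j = XX k ! nat (j + 4^k)"
  using assms
proof (induct k rule: dec_induct)
  case base then show ?case by (simp add: xi0_def)
next
  case (step k)
  have lt: "\<bar>j\<bar> < 4^k"
    using step(1) lt_four_pow_int[of k] by linarith
  have m: "nat (j + 4^k) < length (XX k)"
    using lt unfolding length_XX by (simp add: nat_less_iff)
  have l3: "length ((grs^^(2*k)) [A,B,D]) = 3 * 4^k"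
    by (simp add: length_grsn power_mult)
  have "XX (Suc k) ! nat (j + 4^Suc k) = XX k ! nat (j + 4^k)"
    unfolding XX_Suc nat_idx[OF lt] l3[symmetric] nth_append_length_plus
    using m by (simp add: nth_append)
  then show ?case using step by simp
qed

lemma legal_XX: "legal (XX k)"
proof -
  have "sublist [B,A] ((grs^^2) [A])"
    by (simp add: eval_nat_numeral grs_def sublist_Cons_right)
  then have "sublist (XX k) ((grs^^(2*k)) ((grs^^2) [A]))"
    unfolding XX_def by (rule sublist_grsn)
  then show ?thesis unfolding legal_def grsn_grsn by blast
qed

lemma xi0_in: "xi0 \<in> GRS_Xi"
  unfolding GRS_Xi_iff
proof (intro allI)
  fix i n
  define k where "k = nat \<bar>i\<bar> + n"
  have lt: "int k < 4^k" by (rule lt_four_pow_int)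
  have "seq_word xi0 i n = map (\<lambda>t. XX k ! (nat (i + 4^k) + t)) [0..<n]"
    unfolding seq_word_def
  proof (intro map_cong refl)
    fix t assume "t \<in> set [0..<n]"
    then have "nat \<bar>i + int t\<bar> \<le> k" unfolding k_def by auto
    then have "xi0 (i + int t) = XX k ! nat (i + int t + 4^k)" by (rule xi0_stable)
    moreover have "nat (i + int t + 4^k) = nat (i + 4^k) + t"
    proof -
      have "0 \<le> i + 4^k" using lt k_def by linarith
      then show ?thesis by arith
    qed
    ultimately show "xi0 (i + int t) = XX k ! (nat (i + 4^k) + t)" by simp
  qed
  moreover have "nat (i + 4^k) + n \<le> length (XX k)"
  proof -
    have e: "(4::int)^k = int (4^k)" by simp
    have "int k = \<bar>i\<bar> + int n" using k_def by simp
    then show ?thesis using lt unfolding length_XX e by arith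
  qed
  ultimately show "legal (seq_word xi0 i n)"
    using legal_window legal_XX by metis
qed



lemma seq_word_shift: "seq_word (shift_pow m \<eta>) i n = seq_word \<eta> (i - m) n"
  by (simp add: seq_word_def shift_pow_def algebra_simps)

lemma per_seq_window:
  assumes "sublist w u" shows "\<exists>i. seq_word (per_seq u) i (length w) = w"
proof -
  obtain p where p: "p + length w \<le> length u" "w = map (\<lambda>t. u ! (p+t)) [0..<length w]"
    using sublist_window[OF assms] by blast
  have "seq_word (per_seq u) (int p) (length w) = w"
    unfolding seq_word_def per_seq_def
  proof (subst p(2), intro map_cong refl)
    fix t assume "t \<in> set [0..<length w]"
    then have "p + t < length u" using p(1) by auto
    then have "nat ((int p + int t) mod int (length u)) = p + t"
      by (metis mod_less nat_int of_nat_add of_nat_mod)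
    then show "u ! nat ((int p + int t) mod int (length u)) = u ! (p + t)" by simp
  qed
  then show ?thesis by blast
qed

lemma legal_swap: "grs [x] = [a,b] \<Longrightarrow> legal [b,a]"
proof -
  assume h: "grs [x] = [a,b]"
  have s: "sublist [B,A] ((grs^^3) [A])" "sublist [C,A] ((grs^^3) [A])"
    "sublist [B,D] ((grs^^3) [A])" "sublist [C,D] ((grs^^3) [D])"
    by (simp_all add: eval_nat_numeral grs_def sublist_Cons_right)
  show ?thesis using h s unfolding legal_def by (cases x) (auto simp: grs_def)
qed

lemma per_legal:
  assumes n: "n \<le> 2^j"
  shows "legal (seq_word (per_seq ((grs^^(Suc j)) [x])) i n)"
proof -
  obtain a b where ab: "grs [x] = [a,b]" by (cases x) (auto simp: grs_def)
  have ba: "legal [b,a]" by (rule legal_swap[OF ab])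
  define P where "P = (grs^^j) [a]"
  define Q where "Q = (grs^^j) [b]"
  define L :: nat where "L = 2^j"
  have u: "(grs^^(Suc j)) [x] = P @ Q"
    unfolding P_def Q_def funpow_Suc_right comp_def ab
    using grsn_append[of j "[a]" "[b]"] by simp
  have lP: "length P = L" and lQ: "length Q = L"
    unfolding P_def Q_def L_def by (simp_all add: length_grsn)
  have Lpos: "L > 0" unfolding L_def by simp
  define u where "u = P @ Q"
  have lu: "length u = 2*L" unfolding u_def using lP lQ by simp
  define q where "q = nat (i mod int (2*L))"
  have q: "q < 2*L" "int q = i mod int (2*L)" unfolding q_def using Lpos
    by (simp_all add: nat_less_iff)
  have w: "seq_word (per_seq u) i n = map (\<lambda>t. u ! ((q + t) mod (2*L))) [0..<n]"
    unfolding seq_word_def per_seq_def lu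
  proof (intro map_cong refl)
    fix t
    have "(i + int t) mod int (2*L) = (i mod int (2*L) + int t) mod int (2*L)"
      by (simp add: mod_add_left_eq)
    also have "\<dots> = int ((q + t) mod (2*L))" using q(2) by (simp add: of_nat_mod)
    finally show "u ! nat ((i + int t) mod int (2 * L)) = u ! ((q + t) mod (2 * L))" by simp
  qed
  have lu': "legal u" unfolding u_def using legal_letter_word u by metis
  show ?thesis
  proof (cases "q + n \<le> 2*L")
    case True
    have eq: "map (\<lambda>t. u ! ((q + t) mod (2*L))) [0..<n] = map (\<lambda>t. u ! (q + t)) [0..<n]"
      using True by (intro map_cong refl) auto
    have "legal (map (\<lambda>t. u ! (q + t)) [0..<n])" using legal_window[OF lu', of q n] True lu by simp
    then show ?thesis using w eq u u_def by metis
  next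
    case False
    define r where "r = q - L"
    have r: "q = r + L" "r < L" using False n q(1) unfolding r_def L_def by auto
    have "map (\<lambda>t. u ! ((q + t) mod (2*L))) [0..<n] = map (\<lambda>t. (Q @ P) ! (r + t)) [0..<n]"
    proof (intro map_cong refl)
      fix t assume "t \<in> set [0..<n]"
      then have t: "t < n" by simp
      show "u ! ((q + t) mod (2*L)) = (Q @ P) ! (r + t)"
      proof (cases "q + t < 2*L")
        case True
        then show ?thesis using r lP lQ unfolding u_def by (simp add: nth_append)
      next
        case False
        have "(q + t) mod (2*L) = q + t - 2*L"
          using False t n r unfolding L_def by (simp add: le_mod_geq)
        moreover have "r + t < 2*L" using t n r unfolding L_def by simp
        ultimately show ?thesis using False r lP lQ unfolding u_def
          by (auto simp: nth_append)
      qed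
    qed
    moreover have "legal (Q @ P)"
      using legal_grsn[OF ba, of j] grsn_append[of j "[b]" "[a]"] unfolding P_def Q_def by simp
    moreover have "r + n \<le> length (Q @ P)" using r n lP lQ unfolding L_def by simp
    ultimately show ?thesis using w legal_window u u_def by metis
  qed
qed



definition cyl :: "int \<Rightarrow> nat \<Rightarrow> letter list \<Rightarrow> (int \<Rightarrow> letter) set" where
  "cyl i n w = {\<xi>. seq_word \<xi> i n = w}"

lemma topspace_prodtop[simp]: "topspace prodtop = UNIV"
  by (simp add: prodtop_def)

lemma seq_word_eq: "seq_word \<zeta> i n = seq_word \<xi> i n \<longleftrightarrow> (\<forall>t<n. \<zeta> (i + int t) = \<xi> (i + int t))"
  by (auto simp: seq_word_def map_eq_conv)

lemma open_cyl: "openin prodtop (cyl i n w)"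
  unfolding prodtop_def openin_product_topology_alt
proof
  fix x assume x: "x \<in> cyl i n w"
  define U where "U = (\<lambda>j. if j \<in> {i..<i+int n} then {x j} else (UNIV::letter set))"
  have "finite {j \<in> UNIV. U j \<noteq> topspace (discrete_topology UNIV)}"
    by (rule finite_subset[of _ "{i..<i+int n}"]) (auto simp: U_def)
  moreover have "x \<in> Pi\<^sub>E UNIV U" by (simp add: PiE_UNIV_domain U_def)
  moreover have "Pi\<^sub>E UNIV U \<subseteq> cyl i n w"
  proof
    fix \<zeta> assume "\<zeta> \<in> Pi\<^sub>E UNIV U"
    then have "\<forall>t<n. \<zeta> (i + int t) = x (i + int t)"
      by (auto simp: PiE_UNIV_domain U_def Pi_iff split: if_splits)
    then show "\<zeta> \<in> cyl i n w" using x seq_word_eq[of \<zeta> i n x] unfolding cyl_def by simp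
  qed
  ultimately show "\<exists>U. finite {j \<in> UNIV. U j \<noteq> topspace (discrete_topology UNIV)} \<and>
             (\<forall>j\<in>UNIV. openin (discrete_topology UNIV) (U j)) \<and> x \<in> Pi\<^sub>E UNIV U \<and> Pi\<^sub>E UNIV U \<subseteq> cyl i n w"
    by auto
qed

lemma cyl_sub:
  assumes "openin prodtop U" "\<xi> \<in> U"
  shows "\<exists>N::nat. cyl (- int N) (2*N+1) (seq_word \<xi> (- int N) (2*N+1)) \<subseteq> U"
proof -
  obtain V where V: "finite {j \<in> UNIV. V j \<noteq> topspace (discrete_topology UNIV)}"
    "\<xi> \<in> Pi\<^sub>E UNIV V" "Pi\<^sub>E UNIV V \<subseteq> U"
    using assms unfolding prodtop_def openin_product_topology_alt by blast
  define S where "S = {j \<in> UNIV. V j \<noteq> topspace (discrete_topology UNIV)}"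
  define N where "N = nat (Max (insert 0 (abs ` S)))"
  have fS: "finite S" using V(1) S_def by simp
  have bnd: "\<bar>j\<bar> \<le> int N" if "j \<in> S" for j
  proof -
    have "\<bar>j\<bar> \<le> Max (insert 0 (abs ` S))" using fS that by (intro Max_ge) auto
    then show ?thesis unfolding N_def by arith
  qed
  have "cyl (- int N) (2*N+1) (seq_word \<xi> (- int N) (2*N+1)) \<subseteq> Pi\<^sub>E UNIV V"
  proof
    fix \<zeta> assume "\<zeta> \<in> cyl (- int N) (2*N+1) (seq_word \<xi> (- int N) (2*N+1))"
    then have eq: "\<forall>t<2*N+1. \<zeta> (- int N + int t) = \<xi> (- int N + int t)"
      unfolding cyl_def seq_word_eq by simp
    show "\<zeta> \<in> Pi\<^sub>E UNIV V"
      unfolding PiE_UNIV_domain Pi_iff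
    proof (intro ballI)
      fix j :: int
      show "\<zeta> j \<in> V j"
      proof (cases "j \<in> S")
        case True
        define t where "t = nat (j + int N)"
        have "t < 2*N+1" "- int N + int t = j" using bnd[OF True] unfolding t_def by auto
        then have "\<zeta> j = \<xi> j" using eq by metis
        then show ?thesis using V(2) by (auto simp: PiE_UNIV_domain)
      next
        case False
        then show ?thesis unfolding S_def by simp
      qed
    qed
  qed
  then show ?thesis using V(3) by blast
qed

lemma letter_UNIV: "(UNIV::letter set) = {A,B,C,D}"
  using letter.exhaust by auto

lemma compact_prodtop: "compact_space prodtop"
  unfolding prodtop_def compact_space_product_topology compact_space_discrete_topology
  by (simp add: letter_UNIV)

lemma t1_prodtop: "t1_space prodtop"
  unfolding prodtop_def t1_space_product_topology
  by (simp add: Hausdorff_imp_t1_space)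

lemma seq_word_shiftT: "seq_word (shiftT \<xi>) i n = seq_word \<xi> (i - 1) n"
  by (simp add: seq_word_def shiftT_def algebra_simps)

lemma nonXi_open: "\<xi> \<notin> GRS_Xi \<Longrightarrow> \<exists>T. openin prodtop T \<and> \<xi> \<in> T \<and> T \<inter> GRS_Xi = {}"
proof -
  assume "\<xi> \<notin> GRS_Xi"
  then obtain i n where nl: "\<not> legal (seq_word \<xi> i n)" unfolding GRS_Xi_iff by blast
  have "cyl i n (seq_word \<xi> i n) \<inter> GRS_Xi = {}"
  proof (rule ccontr)
    assume "cyl i n (seq_word \<xi> i n) \<inter> GRS_Xi \<noteq> {}"
    then obtain x where x: "x \<in> cyl i n (seq_word \<xi> i n)" "x \<in> GRS_Xi" by blast
    then have "seq_word x i n = seq_word \<xi> i n" by (simp add: cyl_def)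
    moreover have "legal (seq_word x i n)" using x(2) unfolding GRS_Xi_iff by blast
    ultimately show False using nl by simp
  qed
  moreover have "\<xi> \<in> cyl i n (seq_word \<xi> i n)" unfolding cyl_def by simp
  ultimately show ?thesis using open_cyl by blast
qed

lemma Xi_open_compl: "openin prodtop (topspace prodtop - GRS_Xi)"
proof (rule openin_subopen[THEN iffD2], rule ballI)
  fix x assume "x \<in> topspace prodtop - GRS_Xi"
  then have "x \<notin> GRS_Xi" by blast
  then obtain T where "openin prodtop T" "x \<in> T" "T \<inter> GRS_Xi = {}" using nonXi_open by blast
  then show "\<exists>T. openin prodtop T \<and> x \<in> T \<and> T \<subseteq> topspace prodtop - GRS_Xi"
    by (intro exI[of _ T]) auto
qed

lemma Xi_closed: "closedin prodtop GRS_Xi"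
  unfolding closedin_def using Xi_open_compl by simp
lemma Xi_subshift: "GRS_Xi \<in> subshifts"
  unfolding subshifts_def
proof (intro CollectI conjI)
  show "GRS_Xi \<noteq> {}" using xi0_in by blast
  show "closedin prodtop GRS_Xi" by (rule Xi_closed)
  show "shiftT ` GRS_Xi = GRS_Xi"
  proof
    show "shiftT ` GRS_Xi \<subseteq> GRS_Xi"
      by (auto simp: GRS_Xi_iff seq_word_shiftT)
    show "GRS_Xi \<subseteq> shiftT ` GRS_Xi"
    proof
      fix \<xi> assume x: "\<xi> \<in> GRS_Xi"
      define \<zeta> where "\<zeta> = (\<lambda>j. \<xi> (j + 1))"
      have "\<xi> = shiftT \<zeta>" unfolding \<zeta>_def shiftT_def by simp
      moreover have "seq_word \<zeta> i n = seq_word \<xi> (i+1) n" for i n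
        unfolding \<zeta>_def seq_word_def by (simp add: algebra_simps)
      then have "\<zeta> \<in> GRS_Xi" using x unfolding GRS_Xi_iff by simp
      ultimately show "\<xi> \<in> shiftT ` GRS_Xi" by blast
    qed
  qed
qed


lemma Orb_finite:
  assumes "u \<noteq> []" shows "Orb (per_seq u) \<subseteq> (\<lambda>n. shift_pow n (per_seq u)) ` {0..<int (length u)}"
proof
  fix \<zeta> assume "\<zeta> \<in> Orb (per_seq u)"
  then obtain n where n: "\<zeta> = shift_pow n (per_seq u)" unfolding Orb_def by blast
  have "shift_pow n (per_seq u) = shift_pow (n mod int (length u)) (per_seq u)"
    unfolding shift_pow_def per_seq_def by (simp add: mod_diff_right_eq)
  moreover have "n mod int (length u) \<in> {0..<int (length u)}" using assms by simp
  ultimately show "\<zeta> \<in> (\<lambda>n. shift_pow n (per_seq u)) ` {0..<int (length u)}" using n by blast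
qed

lemma Orb_subshift:
  assumes "u \<noteq> []" shows "Orb (per_seq u) \<in> subshifts"
  unfolding subshifts_def
proof (intro CollectI conjI)
  show "Orb (per_seq u) \<noteq> {}" unfolding Orb_def by blast
  have "finite (Orb (per_seq u))" using Orb_finite[OF assms] finite_surj by blast
  then show "closedin prodtop (Orb (per_seq u))"
    using t1_prodtop unfolding t1_space_closedin_finite by simp
  have s1: "shiftT (shift_pow n \<eta>) = shift_pow (n+1) \<eta>" for n and \<eta> :: "int \<Rightarrow> letter"
    by (auto simp: shiftT_def shift_pow_def algebra_simps)
  show "shiftT ` Orb (per_seq u) = Orb (per_seq u)"
  proof
    show "shiftT ` Orb (per_seq u) \<subseteq> Orb (per_seq u)"
      unfolding Orb_def using s1 by auto
    show "Orb (per_seq u) \<subseteq> shiftT ` Orb (per_seq u)"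
    proof
      fix \<zeta> assume "\<zeta> \<in> Orb (per_seq u)"
      then obtain n where n: "\<zeta> = shift_pow n (per_seq u)" unfolding Orb_def by blast
      then have "\<zeta> = shiftT (shift_pow (n - 1) (per_seq u))" using s1 by simp
      then show "\<zeta> \<in> shiftT ` Orb (per_seq u)" unfolding Orb_def by blast
    qed
  qed
qed

lemma limitin_gen:
  assumes "l \<in> \<Union>\<S>" "\<And>V. V \<in> \<S> \<Longrightarrow> l \<in> V \<Longrightarrow> eventually (\<lambda>x. f x \<in> V) F"
  shows "limitin (topology_generated_by \<S>) f l F"
  unfolding limitin_def openin_topology_generated_by_iff
proof (intro conjI allI impI)
  show "l \<in> topspace (topology_generated_by \<S>)" using assms(1) by simp
  fix U assume "generate_topology_on \<S> U \<and> l \<in> U"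
  then have g: "generate_topology_on \<S> U" and l: "l \<in> U" by auto
  from g l show "eventually (\<lambda>x. f x \<in> U) F"
  proof (induct rule: generate_topology_on.induct)
    case Empty then show ?case by simp
  next
    case (Int a b) then show ?case by (auto simp: eventually_conj_iff)
  next
    case (UN K)
    then obtain k where "k \<in> K" "l \<in> k" by blast
    with UN have "eventually (\<lambda>x. f x \<in> k) F" by blast
    then show ?case by (rule eventually_mono) (use \<open>k \<in> K\<close> in blast)
  next
    case (Basis s) then show ?case using assms(2) by blast
  qed
qed



lemma eta_ne: "(grs^^k) [x] \<noteq> []"
proof -
  have "length ((grs^^k) [x]) \<noteq> 0" by (simp add: length_grsn)
  then show ?thesis by auto
qed

lemma ev_words: "eventually (\<lambda>k. \<forall>i. legal (seq_word (eta x k) i n)) sequentially"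
proof (rule eventually_sequentiallyI[of "Suc n"])
  fix k assume k: "Suc n \<le> k"
  then obtain j where j: "k = Suc j" "n \<le> j" by (cases k) auto
  have "n \<le> 2^j" using j(2) less_exp[of j] by linarith
  then show "\<forall>i. legal (seq_word (eta x k) i n)"
    unfolding eta_def j(1) using per_legal by blast
qed

lemma ev_contains:
  assumes "legal w"
  shows "eventually (\<lambda>k. \<exists>i. seq_word (eta x k) i (length w) = w) sequentially"
proof -
  obtain m c where mc: "sublist w ((grs^^m) [c])" using assms unfolding legal_def by blast
  show ?thesis
  proof (rule eventually_sequentiallyI[of "m+3"])
    fix k assume "m + 3 \<le> k"
    then have "sublist w ((grs^^k) [x])" using legal_up[OF mc] by blast
    then show "\<exists>i. seq_word (eta x k) i (length w) = w"
      unfolding eta_def by (rule per_seq_window)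
  qed
qed

lemma Orb_eta_subshift: "Orb (eta x k) \<in> subshifts"
  unfolding eta_def by (rule Orb_subshift[OF eta_ne])

lemma Orb_words:
  assumes "\<zeta> \<in> Orb \<eta>" shows "\<exists>i'. seq_word \<zeta> i n = seq_word \<eta> i' n"
proof -
  obtain m where "\<zeta> = shift_pow m \<eta>" using assms unfolding Orb_def by blast
  then show ?thesis using seq_word_shift by blast
qed


lemma ev_avoid:
  assumes F: "closedin prodtop F" "F \<inter> GRS_Xi = {}"
  shows "eventually (\<lambda>k. Orb (eta x k) \<inter> F = {}) sequentially"
proof -
  define \<C> where "\<C> = {cyl i n w | i n w. \<not> legal w}"
  have cF: "compactin prodtop F" using closedin_compact_space[OF compact_prodtop F(1)] .
  have op: "\<forall>C\<in>\<C>. openin prodtop C" unfolding \<C>_def using open_cyl by blast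
  have cov: "F \<subseteq> \<Union>\<C>"
  proof
    fix \<zeta> assume "\<zeta> \<in> F"
    then have "\<zeta> \<notin> GRS_Xi" using F(2) by blast
    then obtain i n where nl: "\<not> legal (seq_word \<zeta> i n)" unfolding GRS_Xi_iff by blast
    have "\<zeta> \<in> cyl i n (seq_word \<zeta> i n)" unfolding cyl_def by simp
    moreover have "cyl i n (seq_word \<zeta> i n) \<in> \<C>" unfolding \<C>_def using nl by blast
    ultimately show "\<zeta> \<in> \<Union>\<C>" by blast
  qed
  have cc: "\<forall>\<U>. (\<forall>U\<in>\<U>. openin prodtop U) \<and> F \<subseteq> \<Union>\<U> \<longrightarrow> (\<exists>\<F>. finite \<F> \<and> \<F> \<subseteq> \<U> \<and> F \<subseteq> \<Union>\<F>)"
    using cF unfolding compactin_def by (elim conjE)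
  have "\<exists>\<F>. finite \<F> \<and> \<F> \<subseteq> \<C> \<and> F \<subseteq> \<Union>\<F>"
    using cc[rule_format, OF conjI[OF op cov]] .
  then obtain \<F> where fin: "finite \<F>" "\<F> \<subseteq> \<C>" "F \<subseteq> \<Union>\<F>"
    by blast
  have "\<forall>C\<in>\<F>. eventually (\<lambda>k. \<forall>\<zeta>\<in>Orb (eta x k). \<zeta> \<notin> C) sequentially"
  proof
    fix C assume "C \<in> \<F>"
    then obtain i n w where C: "C = cyl i n w" "\<not> legal w" using fin(2) unfolding \<C>_def by blast
    show "eventually (\<lambda>k. \<forall>\<zeta>\<in>Orb (eta x k). \<zeta> \<notin> C) sequentially"
      using ev_words[of x n]
    proof (rule eventually_mono)
      fix k assume L: "\<forall>i. legal (seq_word (eta x k) i n)"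
      show "\<forall>\<zeta>\<in>Orb (eta x k). \<zeta> \<notin> C"
      proof
        fix \<zeta> assume "\<zeta> \<in> Orb (eta x k)"
        then obtain i' where "seq_word \<zeta> i n = seq_word (eta x k) i' n" using Orb_words by blast
        then have "legal (seq_word \<zeta> i n)" using L by simp
        then have "seq_word \<zeta> i n \<noteq> w" using C(2) by auto
        then show "\<zeta> \<notin> C" unfolding C(1) cyl_def by simp
      qed
    qed
  qed
  then have "eventually (\<lambda>k. \<forall>C\<in>\<F>. \<forall>\<zeta>\<in>Orb (eta x k). \<zeta> \<notin> C) sequentially"
    by (rule eventually_ball_finite[OF fin(1)])
  then show ?thesis
  proof (rule eventually_mono)
    fix k assume h: "\<forall>C\<in>\<F>. \<forall>\<zeta>\<in>Orb (eta x k). \<zeta> \<notin> C"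
    show "Orb (eta x k) \<inter> F = {}"
    proof (rule ccontr)
      assume "Orb (eta x k) \<inter> F \<noteq> {}"
      then obtain \<zeta> where z: "\<zeta> \<in> Orb (eta x k)" "\<zeta> \<in> F" by blast
      then obtain C where "C \<in> \<F>" "\<zeta> \<in> C" using fin(3) by blast
      then show False using h z(1) by blast
    qed
  qed
qed


lemma ev_meet:
  assumes U: "openin prodtop U" "GRS_Xi \<inter> U \<noteq> {}"
  shows "eventually (\<lambda>k. Orb (eta x k) \<inter> U \<noteq> {}) sequentially"
proof -
  obtain \<xi> where \<xi>: "\<xi> \<in> GRS_Xi" "\<xi> \<in> U" using U(2) by blast
  obtain N :: nat where N: "cyl (- int N) (2*N+1) (seq_word \<xi> (- int N) (2*N+1)) \<subseteq> U"
    using cyl_sub[OF U(1) \<xi>(2)] by blast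
  define w where "w = seq_word \<xi> (- int N) (2*N+1)"
  have lw: "legal w" "length w = 2*N+1" using \<xi>(1) unfolding w_def GRS_Xi_iff
    by (blast, simp add: seq_word_def)
  show ?thesis using ev_contains[OF lw(1), of x]
  proof (rule eventually_mono)
    fix k assume "\<exists>i. seq_word (eta x k) i (length w) = w"
    then obtain i where i: "seq_word (eta x k) i (2*N+1) = w" using lw(2) by auto
    define \<zeta> where "\<zeta> = shift_pow (- int N - i) (eta x k)"
    have "\<zeta> \<in> Orb (eta x k)" unfolding \<zeta>_def Orb_def by blast
    moreover have "seq_word \<zeta> (- int N) (2*N+1) = w"
      unfolding \<zeta>_def seq_word_shift using i by simp
    then have "\<zeta> \<in> U" using N unfolding w_def cyl_def by blast
    ultimately show "Orb (eta x k) \<inter> U \<noteq> {}" by blast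
  qed
qed


lemma main_limit: "limitin vietoris (\<lambda>k. Orb (eta x k)) GRS_Xi sequentially"
  unfolding vietoris_def
proof (rule limitin_gen)
  let ?S = "{{X \<in> subshifts. X \<inter> F = {} \<and> (\<forall>U\<in>\<U>. X \<inter> U \<noteq> {})} | F \<U>.
        closedin prodtop F \<and> finite \<U> \<and> (\<forall>U\<in>\<U>. openin prodtop U)}"
  have "{X \<in> subshifts. X \<inter> {} = {} \<and> (\<forall>U\<in>{}. X \<inter> U \<noteq> {})} \<in> ?S"
    by (rule CollectI, rule exI[of _ "{}"], rule exI[of _ "{}"]) simp
  moreover have "GRS_Xi \<in> {X \<in> subshifts. X \<inter> {} = {} \<and> (\<forall>U\<in>{}. X \<inter> U \<noteq> {})}"
    using Xi_subshift by simp
  ultimately show "GRS_Xi \<in> \<Union>?S" by (rule UnionI)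
  fix V assume "V \<in> ?S" "GRS_Xi \<in> V"
  from \<open>V \<in> ?S\<close> obtain F \<U> where V: "V = {X \<in> subshifts. X \<inter> F = {} \<and> (\<forall>U\<in>\<U>. X \<inter> U \<noteq> {})}"
    "closedin prodtop F" "finite \<U>" "\<forall>U\<in>\<U>. openin prodtop U"
    unfolding mem_Collect_eq by (elim exE conjE)
  have X: "GRS_Xi \<inter> F = {}" "\<forall>U\<in>\<U>. GRS_Xi \<inter> U \<noteq> {}" using \<open>GRS_Xi \<in> V\<close> unfolding V(1) by simp_all
  have e1: "eventually (\<lambda>k. Orb (eta x k) \<inter> F = {}) sequentially"
    using X(1) by (intro ev_avoid[OF V(2)]) blast
  have e2: "eventually (\<lambda>k. \<forall>U\<in>\<U>. Orb (eta x k) \<inter> U \<noteq> {}) sequentially"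
  proof (rule eventually_ball_finite[OF V(3)], rule ballI)
    fix U assume "U \<in> \<U>"
    then show "eventually (\<lambda>k. Orb (eta x k) \<inter> U \<noteq> {}) sequentially"
      using ev_meet V(4) X(2) by simp
  qed
  show "eventually (\<lambda>k. Orb (eta x k) \<in> V) sequentially"
    using eventually_conj[OF e1 e2]
  proof (rule eventually_mono)
    fix k assume "Orb (eta x k) \<inter> F = {} \<and> (\<forall>U\<in>\<U>. Orb (eta x k) \<inter> U \<noteq> {})"
    then show "Orb (eta x k) \<in> V" unfolding V(1) using Orb_eta_subshift by blast
  qed
qed

theorem proposition15:
  shows "periodically_approximable GRS_Xi \<and>
    (\<forall>x::letter. limitin vietoris (\<lambda>k. Orb (eta x k)) GRS_Xi sequentially)"
proof
  show "\<forall>x::letter. limitin vietoris (\<lambda>k. Orb (eta x k)) GRS_Xi sequentially"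
    using main_limit by blast
  have "periodic_seq (eta A k)" for k
    unfolding periodic_seq_def
  proof (intro exI[of _ "int (length ((grs^^k) [A]))"] conjI allI)
    show "0 < int (length ((grs^^k) [A]))" using eta_ne[of k A] by simp
    fix j show "eta A k (j + int (length ((grs ^^ k) [A]))) = eta A k j"
      unfolding eta_def per_seq_def by simp
  qed
  then show "periodically_approximable GRS_Xi"
    unfolding periodically_approximable_def using main_limit[of A] by blast
qed

end
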